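(* Let $K_0,\dots,K_n$ be strictly concave kernel functions and let $S=S_\sigma$ be a simplex. Then for each $i=0,1,\dots,n$ the function $m_i:S\to\mathbb{R}$ is strictly concave. Consequently $\underline{m}=\min_{j=0,\dots,n}m_j:S\to[-\infty,\infty)$ is strictly concave.
   Context: Identify the torus $\mathbb{T}=\mathbb{R}/2\pi\mathbb{Z}$ with $[0,2\pi)$. A concave kernel function is a $2\pi$-periodic function $K:\mathbb{R}\to[-\infty,\infty)$ which is real-valued and concave on $(0,2\pi)$ with $\lim_{t\downarrow0}K(t)=\lim_{t\uparrow2\pi}K(t)$ existing in $[-\infty,\infty)$; strictly concave if strictly concave on $(0,2\pi)$. For $\mathbf{y}\in\mathbb{T}^n$, $y_0=0$, $y_{n+1}=2\pi$, $F(\mathbf{y},t)=K_0(t)+\sum_{j=1}^nK_j(t-y_j)$. For a permutation $\sigma$ of $\{1,\dots,n\}$ ($\sigma(0)=0,\sigma(n+1)=n+1$), the simplex is $S_\sigma=\{\mathbf{y}:0<y_{\sigma(1)}<\dots<y_{\sigma(n)}<2\pi\}$ (a convex open set when represented in $(0,2\pi)^n$), and for $\mathbf{y}\in S_\sigma$, $m_{\sigma(k)}(\mathbf{y})=\sup_{t\in[y_{\sigma(k)},y_{\sigma(k+1)}]}F(\mathbf{y},t)$, $k=0,\dots,n$. *)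

theory Defs
  imports "HOL-Analysis.Analysis" "HOL-Combinatorics.Permutations"
begin

definition strictly_concave_real :: "real set \<Rightarrow> (real \<Rightarrow> real) \<Rightarrow> bool" where
  "strictly_concave_real S f \<longleftrightarrow>
     (\<forall>x\<in>S. \<forall>y\<in>S. x \<noteq> y \<longrightarrow> (\<forall>u::real. 0 < u \<and> u < 1 \<longrightarrow>
        f (u * x + (1 - u) * y) > u * f x + (1 - u) * f y))"

text \<open>A (strictly concave) kernel function: 2pi-periodic, values in [-inf,inf),
  real valued and strictly concave on (0,2pi), with equal one-sided limits at 0 and 2pi;
  the value at 0 (= 2pi) is taken to be this common limit.\<close>
definition strictly_concave_kernel :: "(real \<Rightarrow> ereal) \<Rightarrow> bool" where
  "strictly_concave_kernel K \<longleftrightarrow>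
     (\<forall>t. K (t + 2 * pi) = K t) \<and>
     (\<forall>t. K t \<noteq> \<infinity>) \<and>
     (\<forall>t\<in>{0<..<2*pi}. K t \<noteq> -\<infinity>) \<and>
     strictly_concave_real {0<..<2*pi} (\<lambda>t. real_of_ereal (K t)) \<and>
     (K \<longlongrightarrow> K 0) (at_right 0) \<and> (K \<longlongrightarrow> K 0) (at_left (2 * pi))"

text \<open>Points y of T^n are represented in (0,2pi)^n as functions nat => real,
  with coordinates 1..n (and value 0 elsewhere). The extended node sequence uses y_0 = 0,
  y_(n+1) = 2pi.\<close>
definition ynode :: "nat \<Rightarrow> (nat \<Rightarrow> real) \<Rightarrow> nat \<Rightarrow> real" where
  "ynode n y j = (if j = 0 then 0 else if j = n + 1 then 2 * pi else y j)"

text \<open>The simplexS S_sigma, sigma a permutation of {1..n} (fixing 0 and n+1).\<close>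
definition simplexS :: "nat \<Rightarrow> (nat \<Rightarrow> nat) \<Rightarrow> (nat \<Rightarrow> real) set" where
  "simplexS n \<sigma> = {y. (\<forall>j. j \<notin> {1..n} \<longrightarrow> y j = 0) \<and>
      (\<forall>k\<le>n. ynode n y (\<sigma> k) < ynode n y (\<sigma> (k + 1)))}"

definition Fsum :: "(nat \<Rightarrow> real \<Rightarrow> ereal) \<Rightarrow> nat \<Rightarrow> (nat \<Rightarrow> real) \<Rightarrow> real \<Rightarrow> ereal" where
  "Fsum K n y t = K 0 t + (\<Sum>j=1..n. K j (t - y j))"

definition mloc :: "(nat \<Rightarrow> real \<Rightarrow> ereal) \<Rightarrow> nat \<Rightarrow> (nat \<Rightarrow> nat) \<Rightarrow> nat \<Rightarrow> (nat \<Rightarrow> real) \<Rightarrow> ereal" where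
  "mloc K n \<sigma> i y =
     (SUP t\<in>{ynode n y i .. ynode n y (\<sigma> (inv \<sigma> i + 1))}. Fsum K n y t)"

definition strictly_concave_pts :: "(nat \<Rightarrow> real) set \<Rightarrow> ((nat \<Rightarrow> real) \<Rightarrow> ereal) \<Rightarrow> bool" where
  "strictly_concave_pts S f \<longleftrightarrow>
     (\<forall>x\<in>S. \<forall>y\<in>S. x \<noteq> y \<longrightarrow> (\<forall>u::real. 0 < u \<and> u < 1 \<longrightarrow>
        f (\<lambda>j. u * x j + (1 - u) * y j) > ereal u * f x + ereal (1 - u) * f y))"

end

theory Submission
  imports Defs
begin

lemma kern_fin:
  assumes "strictly_concave_kernel K" "t \<in> {0<..<2*pi}"
  shows "K t = ereal (real_of_ereal (K t))"
proof -
  have "K t \<noteq> \<infinity>" "K t \<noteq> -\<infinity>" using assms unfolding strictly_concave_kernel_def by blast+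
  then show ?thesis by (cases "K t") auto
qed

lemma kern_notinf:
  assumes "strictly_concave_kernel K" shows "K t \<noteq> \<infinity>"
  using assms unfolding strictly_concave_kernel_def by blast

lemma kern_concave_on:
  assumes "strictly_concave_kernel K"
  shows "concave_on {0<..<2*pi} (\<lambda>t. real_of_ereal (K t))"
proof -
  have sc: "strictly_concave_real {0<..<2*pi} (\<lambda>t. real_of_ereal (K t))"
    using assms unfolding strictly_concave_kernel_def by blast
  show ?thesis
    unfolding concave_on_iff
  proof (intro conjI ballI allI impI)
    show "convex {0<..<2*pi::real}" by simp
    fix x y :: real and u v :: real
    assume x: "x \<in> {0<..<2*pi}" and y: "y \<in> {0<..<2*pi}" and u: "0 \<le> u" and v: "0 \<le> v" and uv: "u + v = 1"
    show "u * real_of_ereal (K x) + v * real_of_ereal (K y) \<le> real_of_ereal (K (u *\<^sub>R x + v *\<^sub>R y))"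
    proof (cases "x = y \<or> u = 0 \<or> v = 0")
      case True
      then show ?thesis
      proof (elim disjE)
        assume "x = y" then show ?thesis using uv by (simp add: algebra_simps flip: distrib_right)
      next
        assume "u = 0" then show ?thesis using uv by simp
      next
        assume "v = 0" then show ?thesis using uv by simp
      qed
    next
      case False
      then have "0 < u" "u < 1" "x \<noteq> y" using u v uv by auto
      then have "real_of_ereal (K (u * x + (1 - u) * y)) > u * real_of_ereal (K x) + (1 - u) * real_of_ereal (K y)"
        using sc x y unfolding strictly_concave_real_def by blast
      moreover have "v = 1 - u" using uv by simp
      ultimately show ?thesis by simp
    qed
  qed
qed

lemma kern_cont:
  assumes K: "strictly_concave_kernel K"
  shows "continuous_on {0..2*pi} K"
proof (rule continuous_on_IccI)
  show "(K \<longlongrightarrow> K 0) (at_right 0)" using K unfolding strictly_concave_kernel_def by blast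
  have "K (0 + 2*pi) = K 0" using K unfolding strictly_concave_kernel_def by blast
  then have e: "K (2*pi) = K 0" by simp
  have "(K \<longlongrightarrow> K 0) (at_left (2*pi))" using K unfolding strictly_concave_kernel_def by blast
  then show "(K \<longlongrightarrow> K (2*pi)) (at_left (2*pi))" using e by simp
  show "0 < 2*pi" by simp
  have c1: "continuous_on {0<..<2*pi} (\<lambda>t. - real_of_ereal (K t))"
    using convex_on_continuous[of "{0<..<2*pi}" "\<lambda>t. - real_of_ereal (K t)"] kern_concave_on[OF K]
    unfolding concave_on_def by simp
  then have c2: "continuous_on {0<..<2*pi} (\<lambda>t. ereal (real_of_ereal (K t)))"
  proof -
    have "continuous_on {0<..<2*pi} (\<lambda>t. - (- real_of_ereal (K t)))"
      using c1 by (rule continuous_on_minus)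
    then have "continuous_on {0<..<2*pi} (\<lambda>t. real_of_ereal (K t))" by simp
    then show ?thesis by (rule continuous_on_ereal)
  qed
  have c3: "continuous_on {0<..<2*pi} K"
  proof -
    have "continuous_on {0<..<2*pi} (\<lambda>t. ereal (real_of_ereal (K t))) = continuous_on {0<..<2*pi} K"
      by (rule continuous_on_cong) (use kern_fin[OF K] in auto)
    then show ?thesis using c2 by simp
  qed
  fix x :: real assume "0 < x" "x < 2*pi"
  then show "(K \<longlongrightarrow> K x) (at x)"
    using c3 continuous_on_eq_continuous_at[of "{0<..<2*pi}" K] by (simp add: isCont_def)
qed


lemma ereal_comb_same:
  assumes "0 < u" "u < 1" "x \<noteq> \<infinity>"
  shows "ereal u * x + ereal (1 - u) * x = x"
proof (cases x)
  case (real r)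
  have "u * r + (1 - u) * r = r" by (simp add: algebra_simps)
  then show ?thesis using real by simp
qed (use assms in auto)

lemma kern_le:
  assumes K: "strictly_concave_kernel K" and a: "a \<in> {0..2*pi}" and b: "b \<in> {0..2*pi}"
    and u: "0 < u" "u < 1"
  shows "ereal u * K a + ereal (1 - u) * K b \<le> K (u * a + (1 - u) * b)"
proof (cases "a = b")
  case True
  then show ?thesis using ereal_comb_same[OF u kern_notinf[OF K]]
    by (simp add: algebra_simps)
next
  case False
  define c where "c = u * a + (1 - u) * b"
  have cI: "c \<in> {0<..<2*pi}"
  proof -
    consider "a < b" | "b < a" using False by linarith
    then show ?thesis
    proof cases
      case 1
      then have "u * a < u * b" using u by simp
      moreover have "(1-u) * a < (1-u) * b" using u 1 by simp
      moreover have "0 \<le> u * a" "0 \<le> (1-u)*a" "u * b \<le> u * (2*pi)" "(1-u)*b \<le> (1-u)*(2*pi)"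
        using a b u by auto
      ultimately show ?thesis unfolding c_def by (auto simp: algebra_simps)
    next
      case 2
      then have "u * b < u * a" using u by simp
      moreover have "(1-u) * b < (1-u) * a" using u 2 by simp
      moreover have "0 \<le> u * b" "0 \<le> (1-u)*b" "u * a \<le> u * (2*pi)" "(1-u)*a \<le> (1-u)*(2*pi)"
        using a b u by auto
      ultimately show ?thesis unfolding c_def by (auto simp: algebra_simps)
    qed
  qed
  define ae where "ae e = (1 - e) * a + e * c" for e
  define be where "be e = (1 - e) * b + e * c" for e
  have inI: "ae e \<in> {0<..<2*pi} \<and> be e \<in> {0<..<2*pi}" if e: "0 < e" "e < 1" for e
  proof -
    have h: "(1 - e) * x + e * c \<in> {0<..<2*pi}" if x: "x \<in> {0..2*pi}" for x
    proof -
      have "0 \<le> (1-e) * x" "(1-e) * x \<le> (1-e) * (2*pi)" "0 < e * c" "e * c < e * (2*pi)"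
        using x e cI by auto
      then show ?thesis by (auto simp: algebra_simps)
    qed
    show ?thesis unfolding ae_def be_def using h a b by blast
  qed
  have comb: "u * ae e + (1 - u) * be e = c" for e
    unfolding ae_def be_def c_def by (simp add: algebra_simps)
  have neq: "ae e \<noteq> be e" if "e < 1" for e
  proof
    assume "ae e = be e"
    then have "(1 - e) * a = (1 - e) * b" unfolding ae_def be_def by simp
    then show False using that False by simp
  qed
  have sc: "strictly_concave_real {0<..<2*pi} (\<lambda>t. real_of_ereal (K t))"
    using K unfolding strictly_concave_kernel_def by blast
  have e01: "\<forall>\<^sub>F e in at_right (0::real). 0 < e \<and> e < 1"
    unfolding eventually_at_right[OF zero_less_one] by (rule exI[of _ 1]) auto
  have ev: "\<forall>\<^sub>F e in at_right 0. ereal u * K (ae e) + ereal (1 - u) * K (be e) \<le> K c"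
    using e01
  proof (rule eventually_mono)
    fix e :: real assume e: "0 < e \<and> e < 1"
    then have "real_of_ereal (K (u * ae e + (1 - u) * be e)) > u * real_of_ereal (K (ae e)) + (1 - u) * real_of_ereal (K (be e))"
      using sc inI[of e] neq[of e] u unfolding strictly_concave_real_def by blast
    then have "u * real_of_ereal (K (ae e)) + (1 - u) * real_of_ereal (K (be e)) \<le> real_of_ereal (K c)"
      using comb[of e] by simp
    then show "ereal u * K (ae e) + ereal (1 - u) * K (be e) \<le> K c"
      using kern_fin[OF K, of "ae e"] kern_fin[OF K, of "be e"] kern_fin[OF K cI] inI[of e] e
      by (metis ereal_less_eq(3) plus_ereal.simps(1) times_ereal.simps(1))
  qed
  have cont: "continuous_on {0..2*pi} K" by (rule kern_cont[OF K])
  have ae_lim: "(ae \<longlongrightarrow> a) (at_right 0)"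
    unfolding ae_def by (auto intro!: tendsto_eq_intros)
  have be_lim: "(be \<longlongrightarrow> b) (at_right 0)"
    unfolding be_def by (auto intro!: tendsto_eq_intros)
  have evin: "\<forall>\<^sub>F e in at_right 0. ae e \<in> {0..2*pi} \<and> be e \<in> {0..2*pi}"
  proof (rule eventually_mono[OF e01])
    fix e :: real assume "0 < e \<and> e < 1"
    then show "ae e \<in> {0..2*pi} \<and> be e \<in> {0..2*pi}" using inI[of e] by auto
  qed
  have l1: "((\<lambda>e. K (ae e)) \<longlongrightarrow> K a) (at_right 0)"
    by (rule continuous_on_tendsto_compose[OF cont ae_lim a]) (use evin in \<open>rule eventually_mono\<close>, auto)
  have l2: "((\<lambda>e. K (be e)) \<longlongrightarrow> K b) (at_right 0)"
    by (rule continuous_on_tendsto_compose[OF cont be_lim b]) (use evin in \<open>rule eventually_mono\<close>, auto)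
  have l3: "((\<lambda>e. ereal u * K (ae e) + ereal (1 - u) * K (be e)) \<longlongrightarrow> ereal u * K a + ereal (1 - u) * K b) (at_right 0)"
  proof (rule tendsto_add_ereal_general)
    have "ereal u * K a \<noteq> \<infinity>" "ereal (1 - u) * K b \<noteq> \<infinity>"
      using kern_notinf[OF K, of a] kern_notinf[OF K, of b] u
      by (cases "K a"; simp; cases "K b"; simp)+
    then show "\<not> (ereal u * K a = \<infinity> \<and> ereal (1 - u) * K b = - \<infinity> \<or> ereal u * K a = - \<infinity> \<and> ereal (1 - u) * K b = \<infinity>)"
      by blast
    show "((\<lambda>e. ereal u * K (ae e)) \<longlongrightarrow> ereal u * K a) (at_right 0)"
      by (rule tendsto_cmult_ereal) (use l1 in auto)
    show "((\<lambda>e. ereal (1 - u) * K (be e)) \<longlongrightarrow> ereal (1 - u) * K b) (at_right 0)"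
      by (rule tendsto_cmult_ereal) (use l2 in auto)
  qed
  show ?thesis
    using tendsto_le[OF trivial_limit_at_right_real tendsto_const l3 ev] unfolding c_def .
qed


lemma comb_interior:
  assumes a: "a \<in> {0..2*pi}" and b: "b \<in> {0..2*pi}" and ab: "a \<noteq> b" and u: "0 < u" "u < 1"
  shows "u * a + (1 - u) * b \<in> {0<..<2*pi}"
proof -
  consider "a < b" | "b < a" using ab by linarith
  then show ?thesis
  proof cases
    case 1
    then have "u * a < u * b" using u by simp
    moreover have "(1-u) * a < (1-u) * b" using u 1 by simp
    moreover have "0 \<le> u * a" "0 \<le> (1-u)*a" "u * b \<le> u * (2*pi)" "(1-u)*b \<le> (1-u)*(2*pi)"
      using a b u by auto
    ultimately show ?thesis by (auto simp: algebra_simps)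
  next
    case 2
    then have "u * b < u * a" using u by simp
    moreover have "(1-u) * b < (1-u) * a" using u 2 by simp
    moreover have "0 \<le> u * b" "0 \<le> (1-u)*b" "u * a \<le> u * (2*pi)" "(1-u)*a \<le> (1-u)*(2*pi)"
      using a b u by auto
    ultimately show ?thesis by (auto simp: algebra_simps)
  qed
qed

lemma kern_less:
  assumes K: "strictly_concave_kernel K" and a: "a \<in> {0..2*pi}" and b: "b \<in> {0..2*pi}"
    and ab: "a \<noteq> b" and u: "0 < u" "u < 1"
  shows "ereal u * K a + ereal (1 - u) * K b < K (u * a + (1 - u) * b)"
proof -
  define c where "c = u * a + (1 - u) * b"
  have cI: "c \<in> {0<..<2*pi}" unfolding c_def by (rule comb_interior[OF a b ab u])
  have Kc: "K c = ereal (real_of_ereal (K c))" by (rule kern_fin[OF K cI])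
  show ?thesis
  proof (cases "K a = -\<infinity> \<or> K b = -\<infinity>")
    case True
    have "ereal u * K a + ereal (1 - u) * K b = -\<infinity>"
      using True u kern_notinf[OF K, of a] kern_notinf[OF K, of b]
      by (cases "K a"; cases "K b"; auto)
    then show ?thesis using Kc unfolding c_def by (metis MInfty_neq_ereal(1) ereal_infty_less(2))
  next
    case False
    then have Ka: "K a = ereal (real_of_ereal (K a))" and Kb: "K b = ereal (real_of_ereal (K b))"
      using kern_notinf[OF K, of a] kern_notinf[OF K, of b] by (cases "K a"; auto; cases "K b"; auto)+
    define A where "A = real_of_ereal (K a)"
    define B where "B = real_of_ereal (K b)"
    define C where "C = real_of_ereal (K c)"
    define a1 where "a1 = (1/2) * a + (1 - 1/2) * c"
    define b1 where "b1 = (1/2) * b + (1 - 1/2) * c"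
    have c0: "c \<in> {0..2*pi}" using cI by auto
    have a1I: "a1 \<in> {0<..<2*pi}" and b1I: "b1 \<in> {0<..<2*pi}"
      using cI a b unfolding a1_def b1_def by auto
    have A1: "ereal (1/2) * K a + ereal (1 - 1/2) * K c \<le> K a1"
      unfolding a1_def by (rule kern_le[OF K a c0]) auto
    have B1: "ereal (1/2) * K b + ereal (1 - 1/2) * K c \<le> K b1"
      unfolding b1_def by (rule kern_le[OF K b c0]) auto
    define A1 where "A1 = real_of_ereal (K a1)"
    define B1 where "B1 = real_of_ereal (K b1)"
    have KA1: "K a1 = ereal A1" unfolding A1_def by (rule kern_fin[OF K a1I])
    have KB1: "K b1 = ereal B1" unfolding B1_def by (rule kern_fin[OF K b1I])
    have Ka': "K a = ereal A" and Kb': "K b = ereal B" and Kc': "K c = ereal C"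
      using Ka Kb Kc unfolding A_def B_def C_def by auto
    have "ereal ((1/2) * A + (1 - 1/2) * C) \<le> ereal A1"
      using A1 unfolding Ka' Kc' KA1 by simp
    then have hA: "(A + C) / 2 \<le> A1" by simp
    have "ereal ((1/2) * B + (1 - 1/2) * C) \<le> ereal B1"
      using B1 unfolding Kb' Kc' KB1 by simp
    then have hB: "(B + C) / 2 \<le> B1" by simp
    have ne: "a1 \<noteq> b1" using ab unfolding a1_def b1_def by simp
    have comb: "u * a1 + (1 - u) * b1 = c"
      unfolding a1_def b1_def c_def by (simp add: field_simps)
    have sc: "strictly_concave_real {0<..<2*pi} (\<lambda>t. real_of_ereal (K t))"
      using K unfolding strictly_concave_kernel_def by blast
    have "u * A1 + (1 - u) * B1 < C"
      using sc a1I b1I ne u comb unfolding strictly_concave_real_def A1_def B1_def C_def by metis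
    moreover have "u * ((A + C) / 2) \<le> u * A1" "(1 - u) * ((B + C) / 2) \<le> (1 - u) * B1"
      using hA hB u by (auto intro: mult_left_mono)
    ultimately have "u * A + (1 - u) * B < C" by (simp add: field_simps)
    then show ?thesis unfolding c_def[symmetric] Ka' Kb' Kc' by simp
  qed
qed


lemma ereal_sum_tendsto:
  fixes f :: "'i \<Rightarrow> 'a \<Rightarrow> ereal"
  assumes "finite A" "\<And>j. j \<in> A \<Longrightarrow> (f j \<longlongrightarrow> L j) F" "\<And>j. j \<in> A \<Longrightarrow> L j \<noteq> \<infinity>"
  shows "((\<lambda>x. \<Sum>j\<in>A. f j x) \<longlongrightarrow> (\<Sum>j\<in>A. L j)) F"
  using assms
proof (induction A rule: finite_induct)
  case empty
  then show ?case by simp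
next
  case (insert a A)
  have s: "(\<Sum>j\<in>A. L j) \<noteq> \<infinity>" using insert by (simp add: sum_Pinfty)
  have "((\<lambda>x. f a x + (\<Sum>j\<in>A. f j x)) \<longlongrightarrow> L a + (\<Sum>j\<in>A. L j)) F"
    by (rule tendsto_add_ereal_general) (use insert s in auto)
  then show ?case using insert by simp
qed

lemma ereal_sum_minf:
  fixes f :: "'i \<Rightarrow> ereal"
  assumes "finite A" "j \<in> A" "f j = -\<infinity>" "\<And>j. j \<in> A \<Longrightarrow> f j \<noteq> \<infinity>"
  shows "(\<Sum>j\<in>A. f j) = -\<infinity>"
  using assms
proof (induction A rule: finite_induct)
  case empty
  then show ?case by simp
next
  case (insert a A)
  have s: "(\<Sum>j\<in>A. f j) \<noteq> \<infinity>" using insert by (simp add: sum_Pinfty)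
  show ?case
  proof (cases "j = a")
    case True
    then show ?thesis using insert s by simp
  next
    case False
    then have "(\<Sum>j\<in>A. f j) = -\<infinity>" using insert by auto
    then show ?thesis using insert by simp
  qed
qed

lemma perm_facts:
  fixes \<sigma> :: "nat \<Rightarrow> nat" and n :: nat
  assumes perm: "\<sigma> permutes {1..n}"
  shows "\<sigma> 0 = 0" "\<sigma> (n + 1) = n + 1" "inv \<sigma> 0 = 0"
    "\<And>j. \<sigma> (inv \<sigma> j) = j" "\<And>j. inv \<sigma> (\<sigma> j) = j"
    "\<And>j. inv \<sigma> j \<in> {1..n} \<longleftrightarrow> j \<in> {1..n}"
    "\<And>j. \<sigma> j \<in> {1..n} \<longleftrightarrow> j \<in> {1..n}"
proof -
  show "\<sigma> 0 = 0" "\<sigma> (n + 1) = n + 1" using permutes_not_in[OF perm, of 0, OF _] permutes_not_in[OF perm, of "n+1"] by (simp_all add: atLeastAtMost_iff)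
  show "inv \<sigma> 0 = 0" using permutes_not_in[OF permutes_inv[OF perm], of 0] by (simp add: atLeastAtMost_iff)
  show "\<And>j. \<sigma> (inv \<sigma> j) = j" "\<And>j. inv \<sigma> (\<sigma> j) = j" using permutes_inverses[OF perm] by auto
  show "\<And>j. inv \<sigma> j \<in> {1..n} \<longleftrightarrow> j \<in> {1..n}" using permutes_in_image[OF permutes_inv[OF perm]] by auto
  show "\<And>j. \<sigma> j \<in> {1..n} \<longleftrightarrow> j \<in> {1..n}" using permutes_in_image[OF perm] by auto
qed

lemma nd_mono:
  assumes y: "y \<in> simplexS n \<sigma>" and kl: "k < l" "l \<le> n + 1"
  shows "ynode n y (\<sigma> k) < ynode n y (\<sigma> l)"
  using kl
proof (induction l)
  case 0
  then show ?case by simp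
next
  case (Suc l)
  have step: "ynode n y (\<sigma> l) < ynode n y (\<sigma> (l + 1))"
    using y Suc.prems unfolding simplexS_def by auto
  show ?case
  proof (cases "k = l")
    case True
    then show ?thesis using step by simp
  next
    case False
    then have "ynode n y (\<sigma> k) < ynode n y (\<sigma> l)" using Suc by auto
    then show ?thesis using step by simp
  qed
qed

lemma nd_range:
  assumes perm: "\<sigma> permutes {1..n}" and y: "y \<in> simplexS n \<sigma>" and k: "k \<le> n + 1"
  shows "0 \<le> ynode n y (\<sigma> k)" "ynode n y (\<sigma> k) \<le> 2 * pi"
proof -
  have a: "ynode n y (\<sigma> 0) = 0" "ynode n y (\<sigma> (n+1)) = 2*pi"
    using perm_facts[OF perm] unfolding ynode_def by auto
  show "0 \<le> ynode n y (\<sigma> k)"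
    using nd_mono[OF y, of 0 k] k a by (cases "k = 0") auto
  show "ynode n y (\<sigma> k) \<le> 2 * pi"
    using nd_mono[OF y, of k "n+1"] k a by (cases "k = n + 1") auto
qed

lemma coord_nd:
  assumes perm: "\<sigma> permutes {1..n}" and j: "j \<in> {1..n}"
  shows "y j = ynode n y (\<sigma> (inv \<sigma> j))" "inv \<sigma> j \<in> {1..n}"
  using perm_facts[OF perm] j unfolding ynode_def by auto


lemma nd_le:
  assumes y: "y \<in> simplexS n \<sigma>" and kl: "k \<le> l" "l \<le> n + 1"
  shows "ynode n y (\<sigma> k) \<le> ynode n y (\<sigma> l)"
  using nd_mono[OF y, of k l] kl by (cases "k = l") auto

lemma main_i:
  fixes K :: "nat \<Rightarrow> real \<Rightarrow> ereal" and n :: nat and \<sigma> :: "nat \<Rightarrow> nat" and i :: nat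
  assumes kern: "\<And>j. j \<le> n \<Longrightarrow> strictly_concave_kernel (K j)"
    and perm: "\<sigma> permutes {1..n}" and i: "i \<le> n"
  shows "(\<forall>y\<in>simplexS n \<sigma>. \<bar>mloc K n \<sigma> i y\<bar> \<noteq> \<infinity>) \<and> strictly_concave_pts (simplexS n \<sigma>) (mloc K n \<sigma> i)"
proof -
  note pf = perm_facts[OF perm]
  define S where "S = simplexS n \<sigma>"
  define k where "k = inv \<sigma> i"
  have k: "k \<le> n" "\<sigma> k = i"
  proof -
    show "\<sigma> k = i" unfolding k_def using pf by simp
    show "k \<le> n"
    proof (cases "i = 0")
      case True then show ?thesis unfolding k_def using pf by simp
    next
      case False then have "i \<in> {1..n}" using i by simp
      then show ?thesis unfolding k_def using pf by auto
    qed
  qed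
  define sh where "sh j = (if inv \<sigma> j \<le> k then 0 else 2*pi)" for j
  define arg where "arg y t j = t - y j + sh j" for y :: "nat \<Rightarrow> real" and t j
  define lo where "lo y = ynode n y i" for y
  define hi where "hi y = ynode n y (\<sigma> (k+1))" for y
  define G where "G y t = (\<Sum>j\<in>{0..n}. K j (arg y t j))" for y t
  have y0: "y 0 = 0" if "y \<in> S" for y using that unfolding S_def simplexS_def by auto
  have sh0: "sh 0 = 0" unfolding sh_def using pf by simp
  have lohi: "lo y < hi y" if "y \<in> S" for y
    unfolding lo_def hi_def using nd_mono[of y n \<sigma> k "k+1"] that k unfolding S_def by simp
  have lo0: "0 \<le> lo y" and hi2: "hi y \<le> 2*pi" if "y \<in> S" for y
    using nd_range[OF perm, of y k] nd_range[OF perm, of y "k+1"] that k unfolding S_def lo_def hi_def by auto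
  have rng: "arg y t j \<in> {0..2*pi} \<and> (t \<in> {lo y<..<hi y} \<longrightarrow> arg y t j \<in> {0<..<2*pi})"
    if y: "y \<in> S" and t: "t \<in> {lo y..hi y}" and j: "j \<le> n" for y t j
  proof (cases "j = 0")
    case True
    then have "arg y t j = t" unfolding arg_def using y0[OF y] sh0 by simp
    then show ?thesis using lo0[OF y] hi2[OF y] t by auto
  next
    case False
    then have jI: "j \<in> {1..n}" using j by simp
    define l where "l = inv \<sigma> j"
    have yj: "y j = ynode n y (\<sigma> l)" and lI: "l \<in> {1..n}" using coord_nd[OF perm jI] unfolding l_def by auto
    have ys: "y \<in> simplexS n \<sigma>" using y unfolding S_def .
    have yjpos: "0 < y j" using nd_mono[OF ys, of 0 l] lI pf unfolding yj ynode_def by auto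
    have yjlt: "y j < 2*pi" using nd_mono[OF ys, of l "n+1"] lI pf unfolding yj ynode_def by auto
    have lok: "lo y = ynode n y (\<sigma> k)" unfolding lo_def using k by simp
    show ?thesis
    proof (cases "l \<le> k")
      case True
      then have "sh j = 0" unfolding sh_def l_def by simp
      moreover have "y j \<le> lo y" unfolding lok yj using nd_le[OF ys True] k by simp
      ultimately show ?thesis unfolding arg_def using t yjpos hi2[OF y] by auto
    next
      case False
      then have "sh j = 2*pi" unfolding sh_def l_def by simp
      moreover have "hi y \<le> y j" unfolding hi_def yj using nd_le[OF ys, of "k+1" l] False lI by simp
      ultimately show ?thesis unfolding arg_def using t yjlt lo0[OF y] by auto
    qed
  qed
  have Fsum_eq: "Fsum K n y t = G y t" if y: "y \<in> S" for y t
  proof -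
    have "(\<Sum>j=1..n. K j (t - y j)) = (\<Sum>j=1..n. K j (arg y t j))"
    proof (rule sum.cong)
      fix j assume j: "j \<in> {1..n}"
      have per: "K j (s + 2*pi) = K j s" for s using kern[of j] j unfolding strictly_concave_kernel_def by auto
      show "K j (t - y j) = K j (arg y t j)"
        unfolding arg_def sh_def using per[of "t - y j"] by auto
    qed simp
    moreover have "arg y t 0 = t" unfolding arg_def using y0[OF y] sh0 by simp
    moreover have "{0..n} = insert 0 {1..n}" by auto
    ultimately show ?thesis unfolding Fsum_def G_def by simp
  qed
  have mloc_eq: "mloc K n \<sigma> i y = (SUP t\<in>{lo y..hi y}. G y t)" if y: "y \<in> S" for y
    unfolding mloc_def lo_def hi_def k_def using Fsum_eq[OF y] by simp
  have cont: "continuous_on {lo y..hi y} (G y)" if y: "y \<in> S" for y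
  proof -
    have cj: "continuous_on {lo y..hi y} (\<lambda>t. K j (arg y t j))" if j: "j \<le> n" for j
    proof (rule continuous_on_compose2[OF kern_cont[OF kern[OF j]]])
      show "continuous_on {lo y..hi y} (\<lambda>t. arg y t j)" unfolding arg_def by (intro continuous_intros)
      show "(\<lambda>t. arg y t j) ` {lo y..hi y} \<subseteq> {0..2*pi}" using rng[OF y _ j] by blast
    qed
    show ?thesis unfolding continuous_on_def
    proof
      fix x assume x: "x \<in> {lo y..hi y}"
      show "(G y \<longlongrightarrow> G y x) (at x within {lo y..hi y})"
        unfolding G_def
      proof (rule ereal_sum_tendsto)
        fix j assume "j \<in> {0..n}"
        then have j: "j \<le> n" by simp
        show "((\<lambda>t. K j (arg y t j)) \<longlongrightarrow> K j (arg y x j)) (at x within {lo y..hi y})"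
          using cj[OF j] x unfolding continuous_on_def by blast
        show "K j (arg y x j) \<noteq> \<infinity>" using kern_notinf[OF kern[OF j]] .
      qed simp
    qed
  qed
  have Gnotinf: "G y t \<noteq> \<infinity>" for y t
    unfolding G_def using kern_notinf[OF kern] by (simp add: sum_Pinfty)
  have maxi: "\<exists>t\<in>{lo y..hi y}. mloc K n \<sigma> i y = G y t \<and>
      (\<forall>j\<le>n. K j (arg y t j) = ereal (real_of_ereal (K j (arg y t j))))" if y: "y \<in> S" for y
  proof -
    obtain t where t: "t \<in> {lo y..hi y}" and tmax: "\<forall>s\<in>{lo y..hi y}. G y s \<le> G y t"
      using continuous_attains_sup[OF compact_Icc _ cont[OF y]] lohi[OF y] by auto
    have m: "mloc K n \<sigma> i y = G y t"
      unfolding mloc_eq[OF y]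
      by (rule antisym) (use t tmax in \<open>auto intro: SUP_upper SUP_least\<close>)
    define mid where "mid = (lo y + hi y) / 2"
    have mid: "mid \<in> {lo y<..<hi y}" unfolding mid_def using lohi[OF y] by auto
    have "G y mid = (\<Sum>j\<in>{0..n}. ereal (real_of_ereal (K j (arg y mid j))))"
      unfolding G_def
    proof (rule sum.cong)
      fix j assume "j \<in> {0..n}"
      then have j: "j \<le> n" by simp
      show "K j (arg y mid j) = ereal (real_of_ereal (K j (arg y mid j)))"
        by (rule kern_fin[OF kern[OF j]]) (use rng[OF y _ j, of mid] mid in auto)
    qed simp
    then have "G y mid \<noteq> -\<infinity>" by simp
    moreover have "G y mid \<le> G y t" using tmax mid by auto
    ultimately have Gt: "G y t \<noteq> -\<infinity>" by auto
    have "\<forall>j\<le>n. K j (arg y t j) = ereal (real_of_ereal (K j (arg y t j)))"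
    proof (intro allI impI)
      fix j assume j: "j \<le> n"
      have "K j (arg y t j) \<noteq> -\<infinity>"
      proof
        assume "K j (arg y t j) = -\<infinity>"
        then have "G y t = -\<infinity>" unfolding G_def
          by (rule ereal_sum_minf[rotated 2]) (use j kern_notinf[OF kern] in auto)
        then show False using Gt by simp
      qed
      then show "K j (arg y t j) = ereal (real_of_ereal (K j (arg y t j)))"
        using kern_notinf[OF kern[OF j]] by (cases "K j (arg y t j)") auto
    qed
    then show ?thesis using t m by blast
  qed
  have Gsum: "G y t = ereal (\<Sum>j\<in>{0..n}. real_of_ereal (K j (arg y t j)))"
    if "\<forall>j\<le>n. K j (arg y t j) = ereal (real_of_ereal (K j (arg y t j)))" for y t
  proof -
    have "G y t = (\<Sum>j\<in>{0..n}. ereal (real_of_ereal (K j (arg y t j))))"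
      unfolding G_def by (rule sum.cong) (use that in auto)
    then show ?thesis by simp
  qed
  have fin: "\<forall>y\<in>S. \<bar>mloc K n \<sigma> i y\<bar> \<noteq> \<infinity>"
  proof
    fix y assume y: "y \<in> S"
    obtain t where "t \<in> {lo y..hi y}" "mloc K n \<sigma> i y = G y t"
      "\<forall>j\<le>n. K j (arg y t j) = ereal (real_of_ereal (K j (arg y t j)))"
      using maxi[OF y] by blast
    then show "\<bar>mloc K n \<sigma> i y\<bar> \<noteq> \<infinity>" using Gsum by simp
  qed
  have ynode_comb: "ynode n (\<lambda>j. u * y j + (1 - u) * z j) m = u * ynode n y m + (1 - u) * ynode n z m" for u y z m
    unfolding ynode_def by (simp add: algebra_simps)
  have comb_S: "(\<lambda>j. u * y j + (1 - u) * z j) \<in> S" if y: "y \<in> S" and z: "z \<in> S" and u: "0 < u" "u < 1" for y z u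
  proof -
    have "u * a + (1 - u) * b < u * a' + (1 - u) * b'" if "a < a'" "b < b'" for a a' b b' :: real
    proof -
      have "u * a < u * a'" "(1-u) * b < (1-u) * b'" using that u by auto
      then show ?thesis by simp
    qed
    then show ?thesis using y z unfolding S_def simplexS_def by (auto simp: ynode_comb)
  qed
  have sc: "strictly_concave_pts S (mloc K n \<sigma> i)"
    unfolding strictly_concave_pts_def
  proof (intro ballI impI allI)
    fix y z :: "nat \<Rightarrow> real" and u :: real
    assume y: "y \<in> S" and z: "z \<in> S" and yz: "y \<noteq> z" and u: "0 < u \<and> u < 1"
    define w where "w = (\<lambda>j. u * y j + (1 - u) * z j)"
    have w: "w \<in> S" unfolding w_def using comb_S y z u by auto
    obtain ty where ty: "ty \<in> {lo y..hi y}" "mloc K n \<sigma> i y = G y ty"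
      "\<forall>j\<le>n. K j (arg y ty j) = ereal (real_of_ereal (K j (arg y ty j)))"
      using maxi[OF y] by blast
    obtain tz where tz: "tz \<in> {lo z..hi z}" "mloc K n \<sigma> i z = G z tz"
      "\<forall>j\<le>n. K j (arg z tz j) = ereal (real_of_ereal (K j (arg z tz j)))"
      using maxi[OF z] by blast
    define tw where "tw = u * ty + (1 - u) * tz"
    have low: "lo w = u * lo y + (1 - u) * lo z" "hi w = u * hi y + (1 - u) * hi z"
      unfolding lo_def hi_def w_def ynode_comb by simp_all
    have tw: "tw \<in> {lo w..hi w}"
    proof -
      have "u * lo y \<le> u * ty" "(1-u) * lo z \<le> (1-u) * tz" "u * ty \<le> u * hi y" "(1-u) * tz \<le> (1-u) * hi z"
        using ty(1) tz(1) u by (auto intro: mult_left_mono)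
      then show ?thesis unfolding low tw_def by simp
    qed
    have argw: "arg w tw j = u * arg y ty j + (1 - u) * arg z tz j" for j
      unfolding arg_def w_def tw_def by (simp add: algebra_simps)
    define Ry where "Ry j = real_of_ereal (K j (arg y ty j))" for j
    define Rz where "Rz j = real_of_ereal (K j (arg z tz j))" for j
    define Rw where "Rw j = real_of_ereal (K j (arg w tw j))" for j
    have termle: "u * Ry j + (1 - u) * Rz j \<le> Rw j
        \<and> (arg y ty j \<noteq> arg z tz j \<longrightarrow> u * Ry j + (1 - u) * Rz j < Rw j)
        \<and> K j (arg w tw j) = ereal (Rw j)" if j: "j \<le> n" for j
    proof -
      have a: "arg y ty j \<in> {0..2*pi}" using rng[OF y ty(1) j] by blast
      have b: "arg z tz j \<in> {0..2*pi}" using rng[OF z tz(1) j] by blast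
      have Ky: "K j (arg y ty j) = ereal (Ry j)" using ty(3) j unfolding Ry_def by auto
      have Kz: "K j (arg z tz j) = ereal (Rz j)" using tz(3) j unfolding Rz_def by auto
      have le: "ereal (u * Ry j + (1 - u) * Rz j) \<le> K j (arg w tw j)"
        using kern_le[OF kern[OF j] a b, of u] u unfolding argw Ky Kz by simp
      have Kw: "K j (arg w tw j) = ereal (Rw j)"
        using le kern_notinf[OF kern[OF j], of "arg w tw j"] unfolding Rw_def
        by (cases "K j (arg w tw j)") auto
      have lt: "arg y ty j \<noteq> arg z tz j \<longrightarrow> ereal (u * Ry j + (1 - u) * Rz j) < K j (arg w tw j)"
        using kern_less[OF kern[OF j] a b, of u] u unfolding argw Ky Kz by simp
      show ?thesis using le lt Kw by simp
    qed
    have ex: "\<exists>j\<in>{0..n}. arg y ty j \<noteq> arg z tz j"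
    proof (cases "ty = tz")
      case False
      then have "arg y ty 0 \<noteq> arg z tz 0" unfolding arg_def using y0[OF y] y0[OF z] by simp
      then show ?thesis by auto
    next
      case True
      obtain j where j: "y j \<noteq> z j" using yz by auto
      have "j \<in> {1..n}"
      proof (rule ccontr)
        assume "j \<notin> {1..n}"
        then show False using y z j unfolding S_def simplexS_def by auto
      qed
      moreover have "arg y ty j \<noteq> arg z tz j" unfolding arg_def using True j by simp
      ultimately show ?thesis by auto
    qed
    have sumlt: "(\<Sum>j\<in>{0..n}. u * Ry j + (1 - u) * Rz j) < (\<Sum>j\<in>{0..n}. Rw j)"
    proof (rule sum_strict_mono_ex1)
      show "\<forall>j\<in>{0..n}. u * Ry j + (1 - u) * Rz j \<le> Rw j" using termle by auto
      obtain j where "j \<in> {0..n}" "arg y ty j \<noteq> arg z tz j" using ex by blast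
      then show "\<exists>j\<in>{0..n}. u * Ry j + (1 - u) * Rz j < Rw j" using termle[of j] by auto
    qed simp
    have Gw: "G w tw = ereal (\<Sum>j\<in>{0..n}. Rw j)"
      using Gsum[of w tw] termle unfolding Rw_def by auto
    have "ereal u * mloc K n \<sigma> i y + ereal (1 - u) * mloc K n \<sigma> i z
        = ereal (u * (\<Sum>j\<in>{0..n}. Ry j) + (1 - u) * (\<Sum>j\<in>{0..n}. Rz j))"
      using ty(2) tz(2) Gsum[OF ty(3)] Gsum[OF tz(3)] unfolding Ry_def Rz_def by simp
    also have "\<dots> = ereal (\<Sum>j\<in>{0..n}. u * Ry j + (1 - u) * Rz j)"
      by (simp add: sum.distrib sum_distrib_left)
    also have "\<dots> < G w tw" using sumlt Gw by simp
    also have "\<dots> \<le> mloc K n \<sigma> i w"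
      unfolding mloc_eq[OF w] using tw by (rule SUP_upper)
    finally show "ereal u * mloc K n \<sigma> i y + ereal (1 - u) * mloc K n \<sigma> i z
        < mloc K n \<sigma> i (\<lambda>j. u * y j + (1 - u) * z j)" unfolding w_def .
  qed
  show ?thesis using fin sc unfolding S_def by blast
qed


theorem proposition7p2:
  fixes K :: "nat \<Rightarrow> real \<Rightarrow> ereal" and n :: nat and \<sigma> :: "nat \<Rightarrow> nat"
  assumes kern: "\<And>j. j \<le> n \<Longrightarrow> strictly_concave_kernel (K j)"
    and perm: "\<sigma> permutes {1..n}"
  shows "(\<forall>i\<le>n. (\<forall>y\<in>simplexS n \<sigma>. \<bar>mloc K n \<sigma> i y\<bar> \<noteq> \<infinity>)
                \<and> strictly_concave_pts (simplexS n \<sigma>) (mloc K n \<sigma> i))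
         \<and> strictly_concave_pts (simplexS n \<sigma>) (\<lambda>y. Min ((\<lambda>j. mloc K n \<sigma> j y) ` {0..n}))"
proof -
  have A: "\<forall>i\<le>n. (\<forall>y\<in>simplexS n \<sigma>. \<bar>mloc K n \<sigma> i y\<bar> \<noteq> \<infinity>)
                \<and> strictly_concave_pts (simplexS n \<sigma>) (mloc K n \<sigma> i)"
  proof (intro allI impI)
    fix i assume i: "i \<le> n"
    show "(\<forall>y\<in>simplexS n \<sigma>. \<bar>mloc K n \<sigma> i y\<bar> \<noteq> \<infinity>) \<and> strictly_concave_pts (simplexS n \<sigma>) (mloc K n \<sigma> i)"
      by (rule main_i[where K=K, OF kern perm i])
  qed
  have B: "strictly_concave_pts (simplexS n \<sigma>) (\<lambda>y. Min ((\<lambda>j. mloc K n \<sigma> j y) ` {0..n}))"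
    unfolding strictly_concave_pts_def
  proof (intro ballI impI allI)
    fix y z :: "nat \<Rightarrow> real" and u :: real
    assume y: "y \<in> simplexS n \<sigma>" and z: "z \<in> simplexS n \<sigma>" and yz: "y \<noteq> z" and u: "0 < u \<and> u < 1"
    define w where "w = (\<lambda>j. u * y j + (1 - u) * z j)"
    have "Min ((\<lambda>j. mloc K n \<sigma> j w) ` {0..n}) \<in> (\<lambda>j. mloc K n \<sigma> j w) ` {0..n}"
      by (rule Min_in) auto
    then obtain j0 where j0: "j0 \<in> {0..n}" and mw: "Min ((\<lambda>j. mloc K n \<sigma> j w) ` {0..n}) = mloc K n \<sigma> j0 w"
      by (rule imageE) auto
    have my: "Min ((\<lambda>j. mloc K n \<sigma> j y) ` {0..n}) \<le> mloc K n \<sigma> j0 y"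
      by (rule Min_le) (use j0 in auto)
    have mz: "Min ((\<lambda>j. mloc K n \<sigma> j z) ` {0..n}) \<le> mloc K n \<sigma> j0 z"
      by (rule Min_le) (use j0 in auto)
    have sc: "strictly_concave_pts (simplexS n \<sigma>) (mloc K n \<sigma> j0)" using A j0 by auto
    have "ereal u * Min ((\<lambda>j. mloc K n \<sigma> j y) ` {0..n}) + ereal (1 - u) * Min ((\<lambda>j. mloc K n \<sigma> j z) ` {0..n})
        \<le> ereal u * mloc K n \<sigma> j0 y + ereal (1 - u) * mloc K n \<sigma> j0 z"
      by (intro add_mono ereal_mult_left_mono my mz) (use u in auto)
    also have "\<dots> < mloc K n \<sigma> j0 w"
      using sc y z yz u unfolding strictly_concave_pts_def w_def by blast
    finally show "ereal u * Min ((\<lambda>j. mloc K n \<sigma> j y) ` {0..n}) + ereal (1 - u) * Min ((\<lambda>j. mloc K n \<sigma> j z) ` {0..n})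
        < Min ((\<lambda>j. mloc K n \<sigma> j (\<lambda>j. u * y j + (1 - u) * z j)) ` {0..n})"
      using mw unfolding w_def by simp
  qed
  show ?thesis using A B by blast
qed

end
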